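(* Let $G=(V,E)$ be a connected unit disk graph. Then the output of Heuristic CDOM on $G$ is a connected dominating set of $G$.
   Context: A graph $G$ is a unit disk graph if its vertices can be put in one-to-one correspondence with closed disks of radius $1$ in the plane so that two vertices are adjacent if and only if the corresponding disks intersect (tangent disks are considered to intersect). A dominating set is a set $V'\subseteq V$ such that every vertex of $V\setminus V'$ has a neighbor in $V'$; it is connected if the subgraph induced on $V'$ is connected. $G(U)$ denotes the subgraph induced on $U$. Heuristic CDOM: (1) pick an arbitrary vertex $v\in V$; (2) construct a breadth-first spanning tree $T$ of $G$ rooted at $v$, let $k$ be its depth and $S_i$ the set of vertices at level $i$ (distance $i$ from $v$ in $T$), $0\le i\le k$; (3) set $IS_0=\{v\}$, $NS_0=\emptyset$; (4) for $i=1,\dots,k$: let $DS_i$ be the set of vertices of $S_i$ adjacent to some vertex of $IS_{i-1}$; let $IS_i$ be any maximal independent set of $G(S_i\setminus DS_i)$; let $NS_i$ be the set of parents in $T$ of the vertices of $IS_i$; (5) output $\left(\bigcup_{i=0}^k IS_i\right)\cup\left(\bigcup_{i=0}^k NS_i\right)$. *)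

theory Defs
  imports "HOL-Analysis.Analysis"
begin

definition simple_graph :: "'a set \<Rightarrow> ('a \<Rightarrow> 'a \<Rightarrow> bool) \<Rightarrow> bool" where
  "simple_graph V E \<longleftrightarrow> finite V \<and>
     (\<forall>u w. E u w \<longrightarrow> u \<in> V \<and> w \<in> V \<and> u \<noteq> w \<and> E w u)"

definition unit_disk_graph :: "'a set \<Rightarrow> ('a \<Rightarrow> 'a \<Rightarrow> bool) \<Rightarrow> bool" where
  "unit_disk_graph V E \<longleftrightarrow> simple_graph V E \<and>
     (\<exists>c :: 'a \<Rightarrow> real ^ 2. inj_on c V \<and>
        (\<forall>u\<in>V. \<forall>w\<in>V. u \<noteq> w \<longrightarrow>
           (E u w \<longleftrightarrow> cball (c u) 1 \<inter> cball (c w) 1 \<noteq> {})))"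

definition walk_in :: "'a set \<Rightarrow> ('a \<Rightarrow> 'a \<Rightarrow> bool) \<Rightarrow> 'a \<Rightarrow> 'a \<Rightarrow> nat \<Rightarrow> bool" where
  "walk_in U E u w n \<longleftrightarrow> (\<exists>xs. length xs = Suc n \<and> hd xs = u \<and> last xs = w \<and>
      set xs \<subseteq> U \<and> (\<forall>i<n. E (xs ! i) (xs ! Suc i)))"

definition connected_set :: "('a \<Rightarrow> 'a \<Rightarrow> bool) \<Rightarrow> 'a set \<Rightarrow> bool" where
  "connected_set E U \<longleftrightarrow> (\<forall>u\<in>U. \<forall>w\<in>U. \<exists>n. walk_in U E u w n)"

definition connected_graph :: "'a set \<Rightarrow> ('a \<Rightarrow> 'a \<Rightarrow> bool) \<Rightarrow> bool" where
  "connected_graph V E \<longleftrightarrow> V \<noteq> {} \<and> connected_set E V"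

definition gdist :: "'a set \<Rightarrow> ('a \<Rightarrow> 'a \<Rightarrow> bool) \<Rightarrow> 'a \<Rightarrow> 'a \<Rightarrow> nat" where
  "gdist V E u w = (LEAST n. walk_in V E u w n)"

definition dominating_set :: "'a set \<Rightarrow> ('a \<Rightarrow> 'a \<Rightarrow> bool) \<Rightarrow> 'a set \<Rightarrow> bool" where
  "dominating_set V E D \<longleftrightarrow> D \<subseteq> V \<and> (\<forall>u\<in>V - D. \<exists>w\<in>D. E u w)"

definition connected_dominating_set :: "'a set \<Rightarrow> ('a \<Rightarrow> 'a \<Rightarrow> bool) \<Rightarrow> 'a set \<Rightarrow> bool" where
  "connected_dominating_set V E D \<longleftrightarrow> dominating_set V E D \<and> connected_set E D"

definition maximal_independent_set :: "('a \<Rightarrow> 'a \<Rightarrow> bool) \<Rightarrow> 'a set \<Rightarrow> 'a set \<Rightarrow> bool" where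
  "maximal_independent_set E W I \<longleftrightarrow> I \<subseteq> W \<and>
     (\<forall>x\<in>I. \<forall>y\<in>I. \<not> E x y) \<and> (\<forall>x\<in>W - I. \<exists>y\<in>I. E x y)"

definition bfs_tree :: "'a set \<Rightarrow> ('a \<Rightarrow> 'a \<Rightarrow> bool) \<Rightarrow> 'a \<Rightarrow> ('a \<Rightarrow> 'a) \<Rightarrow> bool" where
  "bfs_tree V E r par \<longleftrightarrow> r \<in> V \<and>
     (\<forall>u\<in>V - {r}. par u \<in> V \<and> E u (par u) \<and> Suc (gdist V E r (par u)) = gdist V E r u)"

definition level :: "'a set \<Rightarrow> ('a \<Rightarrow> 'a \<Rightarrow> bool) \<Rightarrow> 'a \<Rightarrow> nat \<Rightarrow> 'a set" where
  "level V E r i = {u \<in> V. gdist V E r u = i}"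

definition cdom_run :: "'a set \<Rightarrow> ('a \<Rightarrow> 'a \<Rightarrow> bool) \<Rightarrow> 'a \<Rightarrow> ('a \<Rightarrow> 'a) \<Rightarrow> (nat \<Rightarrow> 'a set) \<Rightarrow> bool" where
  "cdom_run V E r par IS \<longleftrightarrow> bfs_tree V E r par \<and> IS 0 = {r} \<and>
     (\<forall>i\<in>{1..Max (gdist V E r ` V)}.
        maximal_independent_set E
          (level V E r i - {u \<in> level V E r i. \<exists>w\<in>IS (i - 1). E u w}) (IS i))"

definition cdom_output :: "'a set \<Rightarrow> ('a \<Rightarrow> 'a \<Rightarrow> bool) \<Rightarrow> 'a \<Rightarrow> ('a \<Rightarrow> 'a) \<Rightarrow> (nat \<Rightarrow> 'a set) \<Rightarrow> 'a set" where
  "cdom_output V E r par IS =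
     (let k = Max (gdist V E r ` V) in
       (\<Union>i\<in>{0..k}. IS i) \<union> (\<Union>i\<in>{1..k}. par ` IS i))"

end

theory Submission
  imports Defs
begin

lemma walk_refl: "a \<in> U \<Longrightarrow> walk_in U E a a 0"
  unfolding walk_in_def by (rule exI[of _ "[a]"]) auto

lemma walk_snoc:
  assumes "walk_in U E a b n" "E b c" "c \<in> U"
  shows "walk_in U E a c (Suc n)"
proof -
  obtain xs where xs: "length xs = Suc n" "hd xs = a" "last xs = b" "set xs \<subseteq> U"
    "\<forall>i<n. E (xs ! i) (xs ! Suc i)" using assms(1) unfolding walk_in_def by blast
  have ne: "xs \<noteq> []" using xs(1) by auto
  have lx: "xs ! n = b" using xs(1,3) ne by (simp add: last_conv_nth)
  show ?thesis unfolding walk_in_def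
  proof (rule exI[of _ "xs @ [c]"], intro conjI allI impI)
    fix i assume "i < Suc n"
    then consider "i < n" | "i = n" by linarith
    then show "E ((xs @ [c]) ! i) ((xs @ [c]) ! Suc i)"
    proof cases
      case 1 then show ?thesis using xs by (simp add: nth_append)
    next
      case 2 then show ?thesis using xs(1) lx assms(2) by (simp add: nth_append)
    qed
  qed (use xs ne assms in auto)
qed

lemma walk_unsnoc:
  assumes "walk_in U E a c (Suc n)"
  shows "\<exists>b. walk_in U E a b n \<and> E b c"
proof -
  obtain xs where xs: "length xs = Suc (Suc n)" "hd xs = a" "last xs = c" "set xs \<subseteq> U"
    "\<forall>i<Suc n. E (xs ! i) (xs ! Suc i)" using assms(1) unfolding walk_in_def by blast
  have ne: "xs \<noteq> []" using xs(1) by auto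
  have lx: "xs ! Suc n = c" using xs(1,3) ne by (simp add: last_conv_nth)
  let ?ys = "butlast xs"
  have ly: "length ?ys = Suc n" using xs(1) by simp
  have nth: "\<And>i. i < Suc n \<Longrightarrow> ?ys ! i = xs ! i" using ly by (simp add: nth_butlast)
  have yne: "?ys \<noteq> []" using ly by (metis Zero_not_Suc list.size(3))
  have "hd ?ys = xs ! 0" using nth[of 0] yne by (simp add: hd_conv_nth)
  also have "\<dots> = a" using xs(2) ne by (simp add: hd_conv_nth)
  finally have hy: "hd ?ys = a" .
  have ly2: "last ?ys = xs ! n" using ly nth[of n] yne by (simp add: last_conv_nth)
  have sy: "set ?ys \<subseteq> U" using xs(4) by (meson in_set_butlastD subset_iff)
  have "walk_in U E a (xs ! n) n" unfolding walk_in_def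
  proof (rule exI[of _ ?ys], intro conjI allI impI)
    fix i assume "i < n"
    then show "E (?ys ! i) (?ys ! Suc i)" using nth[of i] nth[of "Suc i"] xs(5) by simp
  qed (use ly hy ly2 sy in auto)
  moreover have "E (xs ! n) c" using xs(5) lx by auto
  ultimately show ?thesis by blast
qed

lemma walk_trans:
  assumes "walk_in U E a b m"
  shows "walk_in U E b c n \<Longrightarrow> walk_in U E a c (m + n)"
proof (induction n arbitrary: c)
  case 0
  then obtain xs where "length xs = Suc 0" "hd xs = b" "last xs = c" unfolding walk_in_def by blast
  then have "b = c" by (cases xs) auto
  then show ?case using assms by simp
next
  case (Suc n)
  obtain d where d: "walk_in U E b d n" "E d c" using walk_unsnoc[OF Suc.prems] by blast
  have "c \<in> U"
  proof -
    obtain xs where "length xs = Suc (Suc n)" "last xs = c" "set xs \<subseteq> U"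
      using Suc.prems unfolding walk_in_def by blast
    then show ?thesis by (metis last_in_set list.size(3) nat.distinct(1) subsetD)
  qed
  then show ?case using walk_snoc[OF Suc.IH[OF d(1)] d(2)] by simp
qed

lemma walk_rev:
  assumes sym: "\<And>x y. E x y \<Longrightarrow> E y x" and w: "walk_in U E a b n"
  shows "walk_in U E b a n"
proof -
  obtain xs where xs: "length xs = Suc n" "hd xs = a" "last xs = b" "set xs \<subseteq> U"
    "\<forall>i<n. E (xs ! i) (xs ! Suc i)" using w unfolding walk_in_def by blast
  have ne: "xs \<noteq> []" using xs(1) by auto
  show ?thesis unfolding walk_in_def
  proof (rule exI[of _ "rev xs"], intro conjI allI impI)
    fix i assume i: "i < n"
    have "E (xs ! (n - Suc i)) (xs ! Suc (n - Suc i))" using xs(5) i by auto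
    moreover have "Suc (n - Suc i) = n - i" using i by auto
    ultimately have "E (xs ! (n - Suc i)) (xs ! (n - i))" by simp
    then have "E (xs ! (n - i)) (xs ! (n - Suc i))" by (rule sym)
    then show "E (rev xs ! i) (rev xs ! Suc i)" using xs(1) i by (simp add: rev_nth)
  qed (use xs ne in \<open>auto simp: hd_rev last_rev\<close>)
qed

theorem lemma4p4:
  fixes V :: "'a set" and E :: "'a \<Rightarrow> 'a \<Rightarrow> bool"
    and r :: 'a and par :: "'a \<Rightarrow> 'a" and IS :: "nat \<Rightarrow> 'a set"
  assumes "unit_disk_graph V E"
    and "connected_graph V E"
    and "r \<in> V"
    and "cdom_run V E r par IS"
  shows "connected_dominating_set V E (cdom_output V E r par IS)"
proof -
  have sg: "simple_graph V E" using assms(1) unfolding unit_disk_graph_def by auto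
  have fin: "finite V" and sym: "\<And>x y. E x y \<Longrightarrow> E y x"
    and EV: "\<And>x y. E x y \<Longrightarrow> x \<in> V \<and> y \<in> V"
    using sg unfolding simple_graph_def by auto
  have conn: "\<And>u w. u \<in> V \<Longrightarrow> w \<in> V \<Longrightarrow> \<exists>n. walk_in V E u w n"
    using assms(2) unfolding connected_graph_def connected_set_def by auto
  have g0: "\<And>u. u \<in> V \<Longrightarrow> gdist V E r u = 0 \<Longrightarrow> u = r"
  proof -
    fix u assume u: "u \<in> V" "gdist V E r u = 0"
    obtain n where "walk_in V E r u n" using conn[OF assms(3) u(1)] by blast
    then have "walk_in V E r u (gdist V E r u)" unfolding gdist_def by (rule LeastI)
    then obtain xs where "length xs = 1" "hd xs = r" "last xs = u" using u(2) unfolding walk_in_def by auto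
    then show "u = r" by (cases xs) auto
  qed
  have g00: "gdist V E r r = 0" unfolding gdist_def
    using Least_le[of "\<lambda>n. walk_in V E r r n" 0] walk_refl[OF assms(3), of E] by simp
  define k where "k = Max (gdist V E r ` V)"
  define D where "D = cdom_output V E r par IS"
  have Ddef: "D = (\<Union>i\<in>{0..k}. IS i) \<union> (\<Union>i\<in>{1..k}. par ` IS i)"
    unfolding D_def cdom_output_def k_def Let_def by simp
  have bfs: "bfs_tree V E r par" and IS0: "IS 0 = {r}"
    and mis: "\<And>i. i \<in> {1..k} \<Longrightarrow> maximal_independent_set E
          (level V E r i - {u \<in> level V E r i. \<exists>w\<in>IS (i - 1). E u w}) (IS i)"
    using assms(4) unfolding cdom_run_def k_def by auto
  have par: "\<And>u. u \<in> V - {r} \<Longrightarrow> par u \<in> V \<and> E u (par u) \<and> Suc (gdist V E r (par u)) = gdist V E r u"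
    using bfs unfolding bfs_tree_def by auto
  have ISlev: "\<And>i. i \<in> {1..k} \<Longrightarrow> IS i \<subseteq> level V E r i"
    using mis unfolding maximal_independent_set_def by blast
  have lev: "\<And>u i. u \<in> level V E r i \<Longrightarrow> u \<in> V \<and> gdist V E r u = i"
    unfolding level_def by auto
  have ISV: "\<And>i x. i \<in> {0..k} \<Longrightarrow> x \<in> IS i \<Longrightarrow> x \<in> V"
  proof -
    fix i x assume "i \<in> {0..k}" "x \<in> IS i"
    then show "x \<in> V" using IS0 assms(3) ISlev[of i] lev by (cases "i = 0") auto
  qed
  have parx: "\<And>i x. i \<in> {1..k} \<Longrightarrow> x \<in> IS i \<Longrightarrow>
      par x \<in> V \<and> E x (par x) \<and> par x \<in> level V E r (i - 1)"
  proof -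
    fix i x assume i: "i \<in> {1..k}" and x: "x \<in> IS i"
    have xl: "x \<in> V" "gdist V E r x = i" using lev ISlev[OF i] x by auto
    have "x \<noteq> r" using xl g00 i by auto
    then show "par x \<in> V \<and> E x (par x) \<and> par x \<in> level V E r (i - 1)"
      using par[of x] xl unfolding level_def by auto
  qed
  have DV: "D \<subseteq> V" unfolding Ddef using ISV parx by auto
  have parD: "\<And>i x. i \<in> {1..k} \<Longrightarrow> x \<in> IS i \<Longrightarrow> par x \<in> D" unfolding Ddef by auto
  have ISD: "\<And>i x. i \<in> {0..k} \<Longrightarrow> x \<in> IS i \<Longrightarrow> x \<in> D" unfolding Ddef by auto
  have rD: "r \<in> D" unfolding Ddef using IS0 by auto
  have dom: "dominating_set V E D"
    unfolding dominating_set_def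
  proof (intro conjI ballI DV)
    fix u assume u: "u \<in> V - D"
    define i where "i = gdist V E r u"
    have ik: "i \<le> k" unfolding i_def k_def using u fin by auto
    have "u \<noteq> r" using u rD by auto
    then have "i \<noteq> 0" using g0 u unfolding i_def by auto
    then have i1: "i \<in> {1..k}" using ik by auto
    have ul: "u \<in> level V E r i" using u unfolding level_def i_def by auto
    show "\<exists>w\<in>D. E u w"
    proof (cases "\<exists>w\<in>IS (i - 1). E u w")
      case True then show ?thesis unfolding Ddef using ik by fastforce
    next
      case False
      then have "u \<in> level V E r i - {u \<in> level V E r i. \<exists>w\<in>IS (i - 1). E u w}" using ul by auto
      moreover have "u \<notin> IS i" using u i1 unfolding Ddef by auto
      ultimately obtain y where "y \<in> IS i" "E u y" using mis[OF i1]
        unfolding maximal_independent_set_def by blast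
      then show ?thesis using ISD[of i y] i1 by auto
    qed
  qed
  have A: "\<And>x. i \<le> k \<Longrightarrow> x \<in> IS i \<Longrightarrow> \<exists>n. walk_in D E r x n" for i
  proof (induction i rule: less_induct)
    case (less i)
    fix x assume ik: "i \<le> k" and x: "x \<in> IS i"
    show "\<exists>n. walk_in D E r x n"
    proof (cases "i = 0")
      case True then show ?thesis using x IS0 walk_refl[OF rD] by auto
    next
      case False
      then have i1: "i \<in> {1..k}" using ik by auto
      define p where "p = par x"
      have pp: "p \<in> V" "E x p" "p \<in> level V E r (i - 1)" "p \<in> D"
        using parx[OF i1 x] parD[OF i1 x] unfolding p_def by auto
      have xD: "x \<in> D" using ISD i1 x by auto
      have Epx: "E p x" using sym pp(2) by auto
      have "\<exists>n. walk_in D E r p n"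
      proof (cases "i = 1")
        case True
        then have "p = r" using g0 pp lev by auto
        then show ?thesis using walk_refl[OF rD] by auto
      next
        case False
        then have i2: "i - 1 \<in> {1..k}" using i1 by auto
        show ?thesis
        proof (cases "\<exists>w\<in>IS (i - 1 - 1). E p w")
          case True
          then obtain w where w: "w \<in> IS (i - 1 - 1)" "E p w" by blast
          have "i - 1 - 1 < i" "i - 1 - 1 \<le> k" using i1 by auto
          then obtain n where "walk_in D E r w n" using less.IH[of "i - 1 - 1" w] w(1) by blast
          then show ?thesis using walk_snoc[of D E r w n p] sym w pp by blast
        next
          case nw: False
          then have pW: "p \<in> level V E r (i - 1) - {u \<in> level V E r (i - 1). \<exists>w\<in>IS (i - 1 - 1). E u w}"
            using pp by auto
          show ?thesis
          proof (cases "p \<in> IS (i - 1)")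
            case True then show ?thesis using less.IH[of "i - 1" p] i1 by auto
          next
            case False
            then obtain y where y: "y \<in> IS (i - 1)" "E p y" using mis[OF i2] pW
              unfolding maximal_independent_set_def by blast
            have "i - 1 < i" "i - 1 \<le> k" using i1 by auto
            then obtain n where "walk_in D E r y n" using less.IH[of "i - 1" y] y(1) by blast
            then show ?thesis using walk_snoc[of D E r y n p] sym y pp by blast
          qed
        qed
      qed
      then show ?thesis using walk_snoc[of D E r p _ x] Epx xD by blast
    qed
  qed
  have B: "\<And>d. d \<in> D \<Longrightarrow> \<exists>n. walk_in D E r d n"
  proof -
    fix d assume "d \<in> D"
    then consider i where "i \<in> {0..k}" "d \<in> IS i" | i x where "i \<in> {1..k}" "x \<in> IS i" "d = par x"
      unfolding Ddef by blast
    then show "\<exists>n. walk_in D E r d n"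
    proof cases
      case 1 then show ?thesis using A by auto
    next
      case (2 i x)
      then obtain n where "walk_in D E r x n" using A by auto
      then show ?thesis using walk_snoc[of D E r x n d] parx[OF 2(1,2)] parD[OF 2(1,2)] 2(3) by blast
    qed
  qed
  have "connected_set E D" unfolding connected_set_def
  proof (intro ballI)
    fix u w assume "u \<in> D" "w \<in> D"
    then obtain m n where mn: "walk_in D E r u m" "walk_in D E r w n" using B by blast
    have "walk_in D E u r m" using walk_rev[of E D r u m] sym mn(1) by blast
    then show "\<exists>n. walk_in D E u w n" using walk_trans[OF _ mn(2)] by blast
  qed
  then show ?thesis using dom unfolding connected_dominating_set_def D_def by auto
qed

end
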